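(* Let $\Phi$ be a second-order constraint problem with model $(J,\xi)$. Then there exists a second-order substitution $\xi_r$ such that $(J,\xi_r)$ is a model of $\Phi$ and $\mathrm{Var}(\xi_r(\alpha))\subseteq\mathrm{SV}(\alpha)$ for every second-order variable $\alpha$ occurring in $\Phi$.
   Context: Index terms over index variables $i$ and index symbols $g$ (including $0,\mathsf s,+$); an interpretation $J$ maps each $k$-ary $g$ to a total weakly monotone function $\mathbb N^k\to\mathbb N$ ($0,\mathsf s,+$ as zero, successor, addition); $a\le_J b$ iff $[a]^\beta_J\le[b]^\beta_J$ for every assignment $\beta$ of naturals to index variables. Second-order index terms: $a::=i\mid\alpha\mid g(a_1,\dots,a_{\mathrm{ar}(g)})$ where $\alpha$ ranges over a countably infinite set of second-order index variables; $\mathrm{Var}(a)$ is the set of (first-order) index variables and $\mathrm{SOVar}(a)$ the set of second-order variables of $a$. A second-order constraint problem (SOCP) $\Phi$ is a set of inequality constraints $a\le b$ (second-order index terms) and occurrence constraints $i\notin\alpha$. A second-order substitution $\xi$ maps second-order variables to index terms containing no second-order variables. $(J,\xi)$ is a model of $\Phi$ if $a\xi\le_J b\xi$ for every inequality $a\le b\in\Phi$ and $i\notin\mathrm{Var}(\xi(\alpha))$ for every occurrence constraint $i\notin\alpha\in\Phi$. Skolem variables: for the second-order variables $\beta$ of $\Phi$, let $V(\beta)$ be the least sets of index variables such that for every $(a\le b)\in\Phi$ with $\beta\in\mathrm{SOVar}(b)$: $\mathrm{Var}(a)\subseteq V(\beta)$, and $V(\alpha)\subseteq V(\beta)$ for every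 $\alpha\in\mathrm{SOVar}(a)$. Then $\mathrm{SV}(\beta)=V(\beta)\setminus\{i\mid(i\notin\beta)\in\Phi\}$. *)

theory Defs
  imports Main
begin

datatype 'g isym = IZero | ISucc | IPlus | ISym 'g

(* Second-order index terms over index variables 'v and second-order variables 's.
   First-order index terms are those without second-order variables. *)
datatype ('v, 's, 'g) iterm =
    IVar 'v
  | SOVar 's
  | IApp "'g isym" "('v, 's, 'g) iterm list"

fun sym_arity :: "('g \<Rightarrow> nat) \<Rightarrow> 'g isym \<Rightarrow> nat" where
  "sym_arity ar IZero = 0"
| "sym_arity ar ISucc = 1"
| "sym_arity ar IPlus = 2"
| "sym_arity ar (ISym g) = ar g"

fun wf_iterm :: "('g \<Rightarrow> nat) \<Rightarrow> ('v, 's, 'g) iterm \<Rightarrow> bool" where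
  "wf_iterm ar (IVar i) = True"
| "wf_iterm ar (SOVar \<alpha>) = True"
| "wf_iterm ar (IApp f ts) = (length ts = sym_arity ar f \<and> (\<forall>t\<in>set ts. wf_iterm ar t))"

fun Vars :: "('v, 's, 'g) iterm \<Rightarrow> 'v set" where
  "Vars (IVar i) = {i}"
| "Vars (SOVar \<alpha>) = {}"
| "Vars (IApp f ts) = (\<Union>t\<in>set ts. Vars t)"

fun SOVars :: "('v, 's, 'g) iterm \<Rightarrow> 's set" where
  "SOVars (IVar i) = {}"
| "SOVars (SOVar \<alpha>) = {\<alpha>}"
| "SOVars (IApp f ts) = (\<Union>t\<in>set ts. SOVars t)"

definition wf_interp :: "('g \<Rightarrow> nat) \<Rightarrow> ('g \<Rightarrow> nat list \<Rightarrow> nat) \<Rightarrow> bool" where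
  "wf_interp ar J \<longleftrightarrow>
     (\<forall>g xs ys. length xs = ar g \<and> length ys = ar g \<and>
        (\<forall>k < ar g. xs ! k \<le> ys ! k) \<longrightarrow> J g xs \<le> J g ys)"

fun interp_sym :: "('g \<Rightarrow> nat list \<Rightarrow> nat) \<Rightarrow> 'g isym \<Rightarrow> nat list \<Rightarrow> nat" where
  "interp_sym J IZero xs = 0"
| "interp_sym J ISucc xs = Suc (xs ! 0)"
| "interp_sym J IPlus xs = xs ! 0 + xs ! 1"
| "interp_sym J (ISym g) xs = J g xs"

(* value [a]^beta_J; second-order variables get the dummy value 0
   (only ever applied to terms without second-order variables) *)
fun ieval :: "('g \<Rightarrow> nat list \<Rightarrow> nat) \<Rightarrow> ('v \<Rightarrow> nat) \<Rightarrow> ('v, 's, 'g) iterm \<Rightarrow> nat" where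
  "ieval J \<beta> (IVar i) = \<beta> i"
| "ieval J \<beta> (SOVar \<alpha>) = 0"
| "ieval J \<beta> (IApp f ts) = interp_sym J f (map (ieval J \<beta>) ts)"

definition leJ :: "('g \<Rightarrow> nat list \<Rightarrow> nat) \<Rightarrow> ('v, 's, 'g) iterm \<Rightarrow> ('v, 's, 'g) iterm \<Rightarrow> bool" where
  "leJ J a b \<longleftrightarrow> (\<forall>\<beta>. ieval J \<beta> a \<le> ieval J \<beta> b)"

fun so_apply :: "('s \<Rightarrow> ('v, 's, 'g) iterm) \<Rightarrow> ('v, 's, 'g) iterm \<Rightarrow> ('v, 's, 'g) iterm" where
  "so_apply \<xi> (IVar i) = IVar i"
| "so_apply \<xi> (SOVar \<alpha>) = \<xi> \<alpha>"
| "so_apply \<xi> (IApp f ts) = IApp f (map (so_apply \<xi>) ts)"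

definition so_subst :: "('g \<Rightarrow> nat) \<Rightarrow> ('s \<Rightarrow> ('v, 's, 'g) iterm) \<Rightarrow> bool" where
  "so_subst ar \<xi> \<longleftrightarrow> (\<forall>\<alpha>. wf_iterm ar (\<xi> \<alpha>) \<and> SOVars (\<xi> \<alpha>) = {})"

datatype ('v, 's, 'g) constr =
    Leq "('v, 's, 'g) iterm" "('v, 's, 'g) iterm"
  | NotIn 'v 's

definition wf_socp :: "('g \<Rightarrow> nat) \<Rightarrow> ('v, 's, 'g) constr set \<Rightarrow> bool" where
  "wf_socp ar \<Phi> \<longleftrightarrow> (\<forall>a b. Leq a b \<in> \<Phi> \<longrightarrow> wf_iterm ar a \<and> wf_iterm ar b)"

definition is_model ::
  "('g \<Rightarrow> nat list \<Rightarrow> nat) \<Rightarrow> ('s \<Rightarrow> ('v, 's, 'g) iterm) \<Rightarrow> ('v, 's, 'g) constr set \<Rightarrow> bool" where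
  "is_model J \<xi> \<Phi> \<longleftrightarrow>
     (\<forall>a b. Leq a b \<in> \<Phi> \<longrightarrow> leJ J (so_apply \<xi> a) (so_apply \<xi> b)) \<and>
     (\<forall>i \<alpha>. NotIn i \<alpha> \<in> \<Phi> \<longrightarrow> i \<notin> Vars (\<xi> \<alpha>))"

definition SOVars_socp :: "('v, 's, 'g) constr set \<Rightarrow> 's set" where
  "SOVars_socp \<Phi> =
     (\<Union>c\<in>\<Phi>. case c of Leq a b \<Rightarrow> SOVars a \<union> SOVars b | NotIn i \<alpha> \<Rightarrow> {\<alpha>})"

inductive inV :: "('v, 's, 'g) constr set \<Rightarrow> 'v \<Rightarrow> 's \<Rightarrow> bool" for \<Phi> where
  base: "\<lbrakk>Leq a b \<in> \<Phi>; \<beta> \<in> SOVars b; i \<in> Vars a\<rbrakk> \<Longrightarrow> inV \<Phi> i \<beta>"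
| step: "\<lbrakk>Leq a b \<in> \<Phi>; \<beta> \<in> SOVars b; \<alpha> \<in> SOVars a; inV \<Phi> i \<alpha>\<rbrakk> \<Longrightarrow> inV \<Phi> i \<beta>"

definition SV :: "('v, 's, 'g) constr set \<Rightarrow> 's \<Rightarrow> 'v set" where
  "SV \<Phi> \<beta> = {i. inV \<Phi> i \<beta>} - {i. NotIn i \<beta> \<in> \<Phi>}"

end

theory Submission
  imports Defs
begin

fun gen :: "('v \<Rightarrow> ('v, 's, 'g) iterm) \<Rightarrow> ('s \<Rightarrow> ('v, 's, 'g) iterm) \<Rightarrow> ('v, 's, 'g) iterm \<Rightarrow> ('v, 's, 'g) iterm" where
  "gen f \<sigma> (IVar i) = f i"
| "gen f \<sigma> (SOVar \<alpha>) = \<sigma> \<alpha>"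
| "gen f \<sigma> (IApp g ts) = IApp g (map (gen f \<sigma>) ts)"

lemma so_apply_gen: "so_apply \<sigma> t = gen IVar \<sigma> t"
  by (induction t) auto

lemma gen_id: "gen IVar SOVar t = t"
  by (induction t) (simp_all add: map_idI)

lemma interp_sym_mono:
  assumes "wf_interp ar J" "length xs = sym_arity ar f" "length ys = sym_arity ar f"
    "\<forall>k<sym_arity ar f. xs ! k \<le> ys ! k"
  shows "interp_sym J f xs \<le> interp_sym J f ys"
proof (cases f)
  case IPlus
  then have "xs ! 0 \<le> ys ! 0" "xs ! 1 \<le> ys ! 1" using assms(4) by auto
  then show ?thesis using IPlus by simp
qed (use assms in \<open>auto simp: wf_interp_def\<close>)

lemma mono2:
  assumes "wf_interp ar J" "wf_iterm ar b"
    "\<forall>i\<in>Vars b. ieval J \<gamma> (f1 i) \<le> ieval J \<beta> (f2 i)"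
    "\<forall>\<alpha>\<in>SOVars b. ieval J \<gamma> (\<sigma>1 \<alpha>) \<le> ieval J \<beta> (\<sigma>2 \<alpha>)"
  shows "ieval J \<gamma> (gen f1 \<sigma>1 b) \<le> ieval J \<beta> (gen f2 \<sigma>2 b)"
  using assms(2-4)
proof (induction b)
  case (IApp g ts)
  have "\<forall>k<sym_arity ar g. map (ieval J \<gamma>) (map (gen f1 \<sigma>1) ts) ! k \<le> map (ieval J \<beta>) (map (gen f2 \<sigma>2) ts) ! k"
    using IApp by (auto dest!: nth_mem)
  then show ?case using IApp interp_sym_mono[OF assms(1)] by simp
qed auto

lemma ieval_cong: "(\<forall>i\<in>Vars t. \<beta> i = \<gamma> i) \<Longrightarrow> ieval J \<beta> t = ieval J \<gamma> t"
proof (induction t)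
  case (IApp g ts)
  then have "map (ieval J \<beta>) ts = map (ieval J \<gamma>) ts" by auto
  then show ?case by (simp only: ieval.simps)
qed auto

lemma Vars_so_apply: "Vars (so_apply \<sigma> t) \<subseteq> Vars t \<union> (\<Union>\<alpha>\<in>SOVars t. Vars (\<sigma> \<alpha>))"
  by (induction t) fastforce+

lemma Vars_gen_zap: "Vars (gen (\<lambda>i. if i \<in> S then IVar i else IApp IZero []) SOVar t) \<subseteq> Vars t \<inter> S"
  by (induction t) auto

lemma SOVars_gen_zap: "SOVars (gen (\<lambda>i. if i \<in> S then IVar i else IApp IZero []) SOVar t) = SOVars t"
  by (induction t) auto

lemma wf_gen_zap: "wf_iterm ar t \<Longrightarrow> wf_iterm ar (gen (\<lambda>i. if i \<in> S then IVar i else IApp IZero []) SOVar t)"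
  by (induction t) auto

theorem mainTheorem10:
  fixes ar :: "'g \<Rightarrow> nat"
    and J :: "'g \<Rightarrow> nat list \<Rightarrow> nat"
    and \<xi> :: "'s \<Rightarrow> ('v, 's, 'g) iterm"
    and \<Phi> :: "('v, 's, 'g) constr set"
  assumes "wf_interp ar J"
    and "wf_socp ar \<Phi>"
    and "so_subst ar \<xi>"
    and "is_model J \<xi> \<Phi>"
  shows "\<exists>\<xi>r. so_subst ar \<xi>r \<and> is_model J \<xi>r \<Phi> \<and>
           (\<forall>\<alpha>\<in>SOVars_socp \<Phi>. Vars (\<xi>r \<alpha>) \<subseteq> SV \<Phi> \<alpha>)"
proof -
  define z where "z S = (\<lambda>i. if i \<in> S then IVar i else (IApp IZero [] :: ('v, 's, 'g) iterm))" for S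
  define \<xi>r where "\<xi>r \<alpha> = gen (z (SV \<Phi> \<alpha>)) SOVar (\<xi> \<alpha>)" for \<alpha>
  have VR: "Vars (\<xi>r \<alpha>) \<subseteq> Vars (\<xi> \<alpha>) \<inter> SV \<Phi> \<alpha>" for \<alpha>
    unfolding \<xi>r_def z_def by (rule Vars_gen_zap)
  have ss: "so_subst ar \<xi>r"
    using assms(3) unfolding so_subst_def \<xi>r_def z_def
    by (simp add: SOVars_gen_zap wf_gen_zap)
  have "leJ J (so_apply \<xi>r a) (so_apply \<xi>r b)" if ab: "Leq a b \<in> \<Phi>" for a b
    unfolding leJ_def
  proof
    fix \<beta>
    define S where "S = Vars a \<union> (\<Union>\<alpha>\<in>SOVars a. {i. inV \<Phi> i \<alpha>})"
    define \<gamma> :: "'v \<Rightarrow> nat" where "\<gamma> i = (if i \<in> S then \<beta> i else 0)" for i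
    have wfa: "wf_iterm ar a" and wfb: "wf_iterm ar b" using assms(2) ab by (auto simp: wf_socp_def)
    have "Vars (so_apply \<xi>r a) \<subseteq> S"
      using Vars_so_apply[of \<xi>r a] VR unfolding S_def SV_def by fastforce
    then have e1: "ieval J \<beta> (so_apply \<xi>r a) = ieval J \<gamma> (so_apply \<xi>r a)"
      by (intro ieval_cong) (auto simp: \<gamma>_def)
    have e2: "ieval J \<gamma> (so_apply \<xi>r a) \<le> ieval J \<gamma> (so_apply \<xi> a)"
      unfolding so_apply_gen
    proof (rule mono2[OF assms(1) wfa])
      show "\<forall>\<alpha>\<in>SOVars a. ieval J \<gamma> (\<xi>r \<alpha>) \<le> ieval J \<gamma> (\<xi> \<alpha>)"
      proof
        fix \<alpha>
        have w: "wf_iterm ar (\<xi> \<alpha>)" using assms(3) by (simp add: so_subst_def)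
        have "\<forall>i\<in>Vars (\<xi> \<alpha>). ieval J \<gamma> (z (SV \<Phi> \<alpha>) i) \<le> ieval J \<gamma> (IVar i)"
          by (simp add: z_def)
        then have "ieval J \<gamma> (gen (z (SV \<Phi> \<alpha>)) SOVar (\<xi> \<alpha>)) \<le> ieval J \<gamma> (gen IVar SOVar (\<xi> \<alpha>))"
          using mono2[OF assms(1) w, of \<gamma> "z (SV \<Phi> \<alpha>)" \<gamma> IVar SOVar SOVar] by simp
        moreover have "gen IVar SOVar (\<xi> \<alpha>) = \<xi> \<alpha>"
          by (rule gen_id)
        ultimately show "ieval J \<gamma> (\<xi>r \<alpha>) \<le> ieval J \<gamma> (\<xi> \<alpha>)"
          unfolding \<xi>r_def by simp
      qed
    qed auto
    have e3: "ieval J \<gamma> (so_apply \<xi> a) \<le> ieval J \<gamma> (so_apply \<xi> b)"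
      using assms(4) ab by (auto simp: is_model_def leJ_def)
    have e4: "ieval J \<gamma> (so_apply \<xi> b) \<le> ieval J \<beta> (so_apply \<xi>r b)"
      unfolding so_apply_gen
    proof (rule mono2[OF assms(1) wfb])
      show "\<forall>i\<in>Vars b. ieval J \<gamma> (IVar i) \<le> ieval J \<beta> (IVar i)" by (simp add: \<gamma>_def)
      show "\<forall>\<alpha>\<in>SOVars b. ieval J \<gamma> (\<xi> \<alpha>) \<le> ieval J \<beta> (\<xi>r \<alpha>)"
      proof
        fix \<alpha> assume \<alpha>: "\<alpha> \<in> SOVars b"
        have w: "wf_iterm ar (\<xi> \<alpha>)" using assms(3) by (simp add: so_subst_def)
        have SV: "S \<subseteq> {i. inV \<Phi> i \<alpha>}"
          unfolding S_def using ab \<alpha> by (auto intro: inV.intros)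
        have "\<forall>i\<in>Vars (\<xi> \<alpha>). ieval J \<gamma> (IVar i) \<le> ieval J \<beta> (z (SV \<Phi> \<alpha>) i)"
        proof
          fix i assume i: "i \<in> Vars (\<xi> \<alpha>)"
          show "ieval J \<gamma> (IVar i) \<le> ieval J \<beta> (z (SV \<Phi> \<alpha>) i)"
          proof (cases "i \<in> SV \<Phi> \<alpha>")
            case True then show ?thesis by (simp add: z_def \<gamma>_def)
          next
            case False
            have "i \<notin> S"
            proof
              assume "i \<in> S"
              with SV False have "NotIn i \<alpha> \<in> \<Phi>" by (auto simp: SV_def)
              with assms(4) i show False by (auto simp: is_model_def)
            qed
            then show ?thesis by (simp add: \<gamma>_def)
          qed
        qed
        then show "ieval J \<gamma> (\<xi> \<alpha>) \<le> ieval J \<beta> (\<xi>r \<alpha>)"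
          using mono2[OF assms(1) w, of \<gamma> IVar \<beta> "z (SV \<Phi> \<alpha>)" SOVar SOVar]
          unfolding \<xi>r_def by (simp add: gen_id)
      qed
    qed
    show "ieval J \<beta> (so_apply \<xi>r a) \<le> ieval J \<beta> (so_apply \<xi>r b)"
      using e1 e2 e3 e4 by linarith
  qed
  moreover have "i \<notin> Vars (\<xi>r \<alpha>)" if "NotIn i \<alpha> \<in> \<Phi>" for i \<alpha>
    using VR[of \<alpha>] assms(4) that by (auto simp: is_model_def)
  ultimately have "is_model J \<xi>r \<Phi>" by (auto simp: is_model_def)
  moreover have "\<forall>\<alpha>\<in>SOVars_socp \<Phi>. Vars (\<xi>r \<alpha>) \<subseteq> SV \<Phi> \<alpha>" using VR by blast
  ultimately show ?thesis using ss by blast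
qed

end
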